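(* Let $p$ be a prime, $\mu\ge1$, $m=p^\mu$, and $n>2$. Let $A=(a_{ij})$ be a random symmetric $n\times n$ matrix over $\mathbf{Z}_m$, conditioned on $a_{11}\equiv0\pmod p$ and $a_{12}\not\equiv0\pmod p$. Then there is an $n\times n$ matrix $V$ (depending on $A$) such that $$VAV^T\equiv\begin{pmatrix} a_{11} & a_{12} & 0\\ a_{21} & a_{22} & 0\\ 0 & 0 & A''\end{pmatrix}\pmod{p^\mu},$$ where the off-diagonal blocks are zero and $A''$ is a random symmetric $(n-2)\times(n-2)$ matrix over $\mathbf{Z}_m$ (i.e. under the stated conditional distribution of $A$, $A''$ reduced mod $m$ is uniformly distributed over symmetric $(n-2)\times(n-2)$ matrices over $\mathbf{Z}_m$).
   Context: For a positive integer $m$, $\mathbf{Z}_m=\{1,2,\ldots,m\}$ (viewed as residues mod $m$). A random symmetric $n\times n$ matrix over $\mathbf{Z}_m$ is one whose entries $a_{ij}$, $i\le j$, are chosen independently and uniformly from $\mathbf{Z}_m$, with $a_{ji}=a_{ij}$. *)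

theory Defs
  imports "HOL-Probability.Probability_Mass_Function" "HOL-Computational_Algebra.Primes"
begin

(* An n x n matrix is a function nat => nat => int with indices 0..n-1,
   and value 0 outside the index range. *)

definition sym_mats :: "nat \<Rightarrow> int \<Rightarrow> (nat \<Rightarrow> nat \<Rightarrow> int) set" where
  "sym_mats n m = {A. (\<forall>i j. (i < n \<and> j < n \<longrightarrow> A i j \<in> {0..<m})
                          \<and> (\<not>(i < n \<and> j < n) \<longrightarrow> A i j = 0))
                     \<and> (\<forall>i j. A i j = A j i)}"

definition mat_mul :: "nat \<Rightarrow> (nat \<Rightarrow> nat \<Rightarrow> int) \<Rightarrow> (nat \<Rightarrow> nat \<Rightarrow> int) \<Rightarrow> (nat \<Rightarrow> nat \<Rightarrow> int)" where
  "mat_mul n A B = (\<lambda>i j. if i < n \<and> j < n then (\<Sum>k<n. A i k * B k j) else 0)"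

definition mat_transp :: "(nat \<Rightarrow> nat \<Rightarrow> int) \<Rightarrow> (nat \<Rightarrow> nat \<Rightarrow> int)" where
  "mat_transp A = (\<lambda>i j. A j i)"

definition congr_mat :: "nat \<Rightarrow> (nat \<Rightarrow> nat \<Rightarrow> int) \<Rightarrow> (nat \<Rightarrow> nat \<Rightarrow> int) \<Rightarrow> (nat \<Rightarrow> nat \<Rightarrow> int)" where
  "congr_mat n V A = mat_mul n (mat_mul n V A) (mat_transp V)"

definition block_form :: "nat \<Rightarrow> int \<Rightarrow> (nat \<Rightarrow> nat \<Rightarrow> int) \<Rightarrow> (nat \<Rightarrow> nat \<Rightarrow> int) \<Rightarrow> bool" where
  "block_form n m A B \<longleftrightarrow>
     (\<forall>i<2. \<forall>j<2. B i j mod m = A i j mod m) \<and>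
     (\<forall>i<2. \<forall>j. 2 \<le> j \<and> j < n \<longrightarrow> B i j mod m = 0 \<and> B j i mod m = 0)"

definition lower_block :: "nat \<Rightarrow> int \<Rightarrow> (nat \<Rightarrow> nat \<Rightarrow> int) \<Rightarrow> (nat \<Rightarrow> nat \<Rightarrow> int)" where
  "lower_block n m B = (\<lambda>i j. if i < n - 2 \<and> j < n - 2 then B (i+2) (j+2) mod m else 0)"

end

theory Submission imports Defs begin

lemma d1: "i < (n::nat) \<Longrightarrow> (\<Sum>k<n. (if k = i then 1 else 0) * f k) = (f i::int)"
  by (simp add: if_distrib[where f="\<lambda>x. x * _"] cong: if_cong)
lemma d2: "i < (n::nat) \<Longrightarrow> (\<Sum>k<n. f k * (if k = i then 1 else 0)) = (f i::int)"
  by (simp add: if_distrib[where f="\<lambda>x. _ * x"] cong: if_cong)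

definition dlt :: "int \<Rightarrow> int \<Rightarrow> int \<Rightarrow> int \<Rightarrow> int" where
  "dlt m a b d = (SOME t. ((a*d - b*b) * t) mod m = 1 mod m)"
definition Xf :: "int \<Rightarrow> (nat \<Rightarrow> nat \<Rightarrow> int) \<Rightarrow> nat \<Rightarrow> int" where
  "Xf m A i = (if 2 \<le> i then dlt m (A 0 0) (A 0 1) (A 1 1) * (A i 0 * A 1 1 - A i 1 * A 0 1) else 0)"
definition Yf :: "int \<Rightarrow> (nat \<Rightarrow> nat \<Rightarrow> int) \<Rightarrow> nat \<Rightarrow> int" where
  "Yf m A i = (if 2 \<le> i then dlt m (A 0 0) (A 0 1) (A 1 1) * (A i 1 * A 0 0 - A i 0 * A 0 1) else 0)"
definition Vf :: "int \<Rightarrow> (nat \<Rightarrow> nat \<Rightarrow> int) \<Rightarrow> nat \<Rightarrow> nat \<Rightarrow> int" where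
  "Vf m A = (\<lambda>i k. (if k = i then 1 else 0) - Xf m A i * (if k = 0 then 1 else 0) - Yf m A i * (if k = 1 then 1 else 0))"

definition VAf :: "int \<Rightarrow> (nat \<Rightarrow> nat \<Rightarrow> int) \<Rightarrow> nat \<Rightarrow> nat \<Rightarrow> int" where
  "VAf m A i l = A i l - Xf m A i * A 0 l - Yf m A i * A 1 l"

lemma VA:
  assumes "2 < n" "i < n" "l < n"
  shows "mat_mul n (Vf m A) A i l = VAf m A i l"
proof -
  have "mat_mul n (Vf m A) A i l =
     (\<Sum>k<n. (if k = i then 1 else 0) * A k l) - Xf m A i * (\<Sum>k<n. (if k = 0 then 1 else 0) * A k l)
       - Yf m A i * (\<Sum>k<n. (if k = 1 then 1 else 0) * A k l)"
    using assms unfolding mat_mul_def Vf_def by (simp add: left_diff_distrib sum_subtractf sum_distrib_left mult.assoc)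
  also have "\<dots> = VAf m A i l" using assms by (simp only: d1, simp add: VAf_def)
  finally show ?thesis .
qed

lemma CM:
  assumes "2 < n" "i < n" "j < n"
  shows "congr_mat n (Vf m A) A i j = VAf m A i j - Xf m A j * VAf m A i 0 - Yf m A j * VAf m A i 1"
proof -
  have "congr_mat n (Vf m A) A i j =
     (\<Sum>l<n. mat_mul n (Vf m A) A i l * (if l = j then 1 else 0)) - Xf m A j * (\<Sum>l<n. mat_mul n (Vf m A) A i l * (if l = 0 then 1 else 0))
       - Yf m A j * (\<Sum>l<n. mat_mul n (Vf m A) A i l * (if l = 1 then 1 else 0))"
    using assms unfolding congr_mat_def mat_mul_def[of n "mat_mul n _ _"] mat_transp_def Vf_def by (simp add: right_diff_distrib sum_subtractf sum_distrib_left mult.assoc mult.left_commute)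
  also have "\<dots> = VAf m A i j - Xf m A j * VAf m A i 0 - Yf m A j * VAf m A i 1"
    using assms by (simp only: d2, simp add: VA)
  finally show ?thesis .
qed

lemma inv_ex: assumes "coprime (D::int) m" shows "\<exists>t. (D*t) mod m = 1 mod m"
proof -
  obtain u v where "u * D + v * m = gcd D m" using bezout_int by blast
  hence "u * D + v * m = 1" using assms by simp
  hence "D * u = 1 + (-v) * m" by (simp add: algebra_simps)
  hence "(D*u) mod m = (1 + (-v) * m) mod m" by simp
  also have "\<dots> = 1 mod m" by (rule mod_mult_self1)
  finally show ?thesis by blast
qed
lemma dlt_prop: assumes "coprime (a*d - b*b) m" shows "((a*d - b*b) * dlt m a b d) mod m = 1 mod m"
  unfolding dlt_def using inv_ex[OF assms] by (rule someI_ex)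

lemma det_coprime:
  assumes "prime p" "int p dvd a" "\<not> int p dvd b"
  shows "coprime (a*d - b*b) (int p ^ \<mu>)"
proof -
  have pp: "prime (int p)" using assms(1) by simp
  have "\<not> int p dvd (a*d - b*b)"
  proof
    assume h: "int p dvd (a*d - b*b)"
    have h2: "int p dvd a*d" using assms(2) by simp
    have "int p dvd b*b" using dvd_diff[OF h2 h] by simp
    hence "int p dvd b" using pp by (simp add: prime_dvd_mult_iff)
    thus False using assms(3) by simp
  qed
  hence "coprime (int p) (a*d - b*b)" using pp by (simp add: prime_imp_coprime)
  hence "coprime (a*d - b*b) (int p)" by (simp add: coprime_commute)
  thus ?thesis by simp
qed

definition projf :: "(nat \<Rightarrow> nat \<Rightarrow> int) \<Rightarrow> nat \<Rightarrow> nat \<Rightarrow> int" where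
  "projf A = (\<lambda>i j. if i < 2 \<or> j < 2 then A i j else 0)"
definition Lf :: "nat \<Rightarrow> int \<Rightarrow> (nat \<Rightarrow> nat \<Rightarrow> int) \<Rightarrow> nat \<Rightarrow> nat \<Rightarrow> int" where
  "Lf n m A = (\<lambda>i j. if i < n - 2 \<and> j < n - 2 then VAf m A (i+2) (j+2) mod m else 0)"
definition Sf :: "int \<Rightarrow> (nat \<Rightarrow> nat \<Rightarrow> int) \<Rightarrow> nat \<Rightarrow> nat \<Rightarrow> int" where
  "Sf m A i j = Xf m A i * A 0 j + Yf m A i * A 1 j"

lemma VAf_Sf: "VAf m A i j = A i j - Sf m A i j"
  by (simp add: VAf_def Sf_def)

lemma Sf_sym:
  assumes sym: "\<forall>i j. A i j = A j i" and "2 \<le> i" "2 \<le> j"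
  shows "Sf m A i j = Sf m A j i"
proof -
  have e: "A 0 j = A j 0" "A 1 j = A j 1" "A 0 i = A i 0" "A 1 i = A i 1" using sym by auto
  show ?thesis using assms(2,3) unfolding Sf_def Xf_def Yf_def e by (simp add: algebra_simps)
qed

lemma XY_proj:
  assumes "\<forall>i j. i < 2 \<or> j < 2 \<longrightarrow> A i j = B i j"
  shows "Xf m A = Xf m B" "Yf m A = Yf m B"
  using assms by (auto simp: fun_eq_iff Xf_def Yf_def)

lemma Sf_proj:
  assumes "\<forall>i j. i < 2 \<or> j < 2 \<longrightarrow> A i j = B i j"
  shows "Sf m A = Sf m B"
  using XY_proj[OF assms] assms by (auto simp: fun_eq_iff Sf_def)

lemma mod_sub_dvd: "(m::int) dvd t \<Longrightarrow> (a - t) mod m = a mod m"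
  using mod_diff_right_eq[of a t m] by (simp add: dvd_eq_mod_eq_0)

lemma VAf_col:
  assumes sym: "\<forall>i j. A i j = A j i" and inv: "((A 0 0 * A 1 1 - A 0 1 * A 0 1) * dlt m (A 0 0) (A 0 1) (A 1 1)) mod m = 1 mod m"
    and "2 \<le> i"
  shows "m dvd VAf m A i 0" "m dvd VAf m A i 1"
proof -
  define D where "D = A 0 0 * A 1 1 - A 0 1 * A 0 1"
  define t where "t = dlt m (A 0 0) (A 0 1) (A 1 1)"
  have md: "m dvd (1 - D * t)" using inv unfolding D_def[symmetric] t_def[symmetric]
    by (metis dvd_eq_mod_eq_0 mod_diff_eq diff_self mod_0)
  have e: "A 1 0 = A 0 1" using sym by auto
  have "VAf m A i 0 = A i 0 * (1 - D * t)" using assms(3)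
    unfolding VAf_def Xf_def Yf_def D_def t_def e by (simp add: algebra_simps)
  thus "m dvd VAf m A i 0" using md by simp
  have "VAf m A i 1 = A i 1 * (1 - D * t)" using assms(3)
    unfolding VAf_def Xf_def Yf_def D_def t_def e by (simp add: algebra_simps)
  thus "m dvd VAf m A i 1" using md by simp
qed

lemma sym_of: "A \<in> sym_mats n m \<Longrightarrow> \<forall>i j. A i j = A j i"
  by (simp add: sym_mats_def)

lemma block_ok:
  assumes n: "2 < n" and sym: "\<forall>i j. A i j = A j i"
    and inv: "((A 0 0 * A 1 1 - A 0 1 * A 0 1) * dlt m (A 0 0) (A 0 1) (A 1 1)) mod m = 1 mod m"
  shows "block_form n m A (congr_mat n (Vf m A) A)"
  unfolding block_form_def
proof (intro conjI allI impI)
  fix i j :: nat assume "i < 2" "j < 2"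
  then show "congr_mat n (Vf m A) A i j mod m = A i j mod m"
    using n by (simp add: CM VAf_def Xf_def Yf_def)
next
  fix i j :: nat assume i: "i < 2" and j: "2 \<le> j \<and> j < n"
  have "congr_mat n (Vf m A) A i j = VAf m A j i"
  proof -
    have "i = 0 \<or> i = 1" using i by auto
    moreover have "A 0 j = A j 0" "A 1 j = A j 1" "A 1 0 = A 0 1" using sym by auto
    ultimately show ?thesis using n i j by (auto simp add: CM VAf_def Xf_def Yf_def)
  qed
  moreover have "m dvd VAf m A j i"
  proof -
    have "i = 0 \<or> i = 1" using i by auto
    thus ?thesis using VAf_col[OF sym inv] j by auto
  qed
  ultimately show "congr_mat n (Vf m A) A i j mod m = 0" by simp
  have "congr_mat n (Vf m A) A j i = VAf m A j i"
    using n i j by (simp add: CM Xf_def Yf_def)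
  with \<open>m dvd VAf m A j i\<close> show "congr_mat n (Vf m A) A j i mod m = 0" by simp
qed

lemma lower_ok:
  assumes n: "2 < n" and sym: "\<forall>i j. A i j = A j i"
    and inv: "((A 0 0 * A 1 1 - A 0 1 * A 0 1) * dlt m (A 0 0) (A 0 1) (A 1 1)) mod m = 1 mod m"
  shows "lower_block n m (congr_mat n (Vf m A) A) = Lf n m A"
proof (rule ext, rule ext)
  fix i j
  show "lower_block n m (congr_mat n (Vf m A) A) i j = Lf n m A i j"
  proof (cases "i < n - 2 \<and> j < n - 2")
    case True
    have d: "m dvd Xf m A (j+2) * VAf m A (i+2) 0 + Yf m A (j+2) * VAf m A (i+2) 1"
      using VAf_col[OF sym inv, of "i+2"] by simp
    have "congr_mat n (Vf m A) A (i+2) (j+2) mod m = VAf m A (i+2) (j+2) mod m"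
    proof -
      have "i+2 < n" "j+2 < n" using True by auto
      hence "congr_mat n (Vf m A) A (i+2) (j+2) = VAf m A (i+2) (j+2) - (Xf m A (j+2) * VAf m A (i+2) 0 + Yf m A (j+2) * VAf m A (i+2) 1)"
        using CM[OF n] by simp
      thus ?thesis using mod_sub_dvd[OF d, of "VAf m A (i+2) (j+2)"] by simp
    qed
    thus ?thesis using True by (simp add: lower_block_def Lf_def)
  qed (auto simp: lower_block_def Lf_def)
qed

lemma Lf_in:
  assumes A: "A \<in> sym_mats n m" and m: "m > 0"
  shows "Lf n m A \<in> sym_mats (n - 2) m"
proof -
  have sym: "\<forall>i j. A i j = A j i" using A by (simp add: sym_mats_def)
  have "VAf m A (i+2) (j+2) = VAf m A (j+2) (i+2)" for i j
    using Sf_sym[OF sym, of "i+2" "j+2" m] sym by (simp add: VAf_Sf)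
  thus ?thesis using m unfolding sym_mats_def Lf_def by auto
qed

lemma sym_bounds: "A \<in> sym_mats n m \<Longrightarrow> i < n \<Longrightarrow> j < n \<Longrightarrow> 0 \<le> A i j \<and> A i j < m"
  unfolding sym_mats_def by auto
lemma sym_zero: "A \<in> sym_mats n m \<Longrightarrow> \<not> (i < n \<and> j < n) \<Longrightarrow> A i j = 0"
  unfolding sym_mats_def by blast

lemma inj_lem:
  assumes A: "A \<in> sym_mats n m" and B: "B \<in> sym_mats n m"
    and P: "projf A = projf B" and L: "Lf n m A = Lf n m B"
  shows "A = B"
proof (rule ext, rule ext)
  fix i j
  have pr: "\<forall>i j. i < 2 \<or> j < 2 \<longrightarrow> A i j = B i j"
  proof (intro allI impI)
    fix i j :: nat assume "i < 2 \<or> j < 2"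
    thus "A i j = B i j" using fun_cong[OF fun_cong[OF P, of i], of j] by (simp add: projf_def)
  qed
  show "A i j = B i j"
  proof (cases "i < 2 \<or> j < 2")
    case True thus ?thesis using pr by blast
  next
    case F: False
    show ?thesis
    proof (cases "i < n \<and> j < n")
      case False thus ?thesis using sym_zero[OF A] sym_zero[OF B] by simp
    next
      case True
      define i' j' where "i' = i - 2" "j' = j - 2"
      have ij: "i = i'+2" "j = j'+2" "i' < n - 2" "j' < n - 2" using F True i'_j'_def by auto
      have "VAf m A i j mod m = VAf m B i j mod m"
        using fun_cong[OF fun_cong[OF L, of i'], of j'] ij by (simp add: Lf_def)
      hence e: "(A i j - Sf m A i j) mod m = (B i j - Sf m A i j) mod m"
        using Sf_proj[OF pr, of m] by (simp add: VAf_Sf)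
      have "A i j mod m = B i j mod m"
      proof -
        have "A i j mod m = ((A i j - Sf m A i j) mod m + Sf m A i j) mod m" by (simp add: mod_add_left_eq)
        also have "\<dots> = ((B i j - Sf m A i j) mod m + Sf m A i j) mod m" using e by simp
        also have "\<dots> = B i j mod m" by (simp add: mod_add_left_eq)
        finally show ?thesis .
      qed
      thus ?thesis using sym_bounds[OF A True[THEN conjunct1] True[THEN conjunct2]]
          sym_bounds[OF B True[THEN conjunct1] True[THEN conjunct2]] by simp
    qed
  qed
qed

definition mk :: "nat \<Rightarrow> int \<Rightarrow> (nat \<Rightarrow> nat \<Rightarrow> int) \<Rightarrow> (nat \<Rightarrow> nat \<Rightarrow> int) \<Rightarrow> nat \<Rightarrow> nat \<Rightarrow> int" where
  "mk n m A0 E = (\<lambda>i j. if i < 2 \<or> j < 2 then A0 i j else if i < n \<and> j < n then (E (i-2) (j-2) + Sf m A0 i j) mod m else 0)"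

lemma mk_lem:
  assumes A0: "A0 \<in> sym_mats n m" and E: "E \<in> sym_mats (n - 2) m" and m: "m > 0"
  shows "mk n m A0 E \<in> sym_mats n m" "projf (mk n m A0 E) = projf A0" "Lf n m (mk n m A0 E) = E"
proof -
  have sym: "\<forall>i j. A0 i j = A0 j i" using A0 by (simp add: sym_mats_def)
  have symE: "\<forall>i j. E i j = E j i" using E by (simp add: sym_mats_def)
  have pr: "\<forall>i j. i < 2 \<or> j < 2 \<longrightarrow> mk n m A0 E i j = A0 i j" by (simp add: mk_def)
  have Sfe: "Sf m (mk n m A0 E) = Sf m A0" using Sf_proj[OF pr] .
  show "projf (mk n m A0 E) = projf A0" using pr by (auto simp: projf_def fun_eq_iff)
  have bnd: "0 \<le> mk n m A0 E i j \<and> mk n m A0 E i j < m" if "i < n" "j < n" for i j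
    using sym_bounds[OF A0 that] m by (simp add: mk_def)
  have zer: "mk n m A0 E i j = 0" if "\<not> (i < n \<and> j < n)" for i j
    using that sym_zero[OF A0 that] by (auto simp: mk_def)
  have sm: "mk n m A0 E i j = mk n m A0 E j i" for i j
  proof (cases "i < 2 \<or> j < 2")
    case True thus ?thesis using sym by (auto simp: mk_def)
  next
    case False
    hence "Sf m A0 i j = Sf m A0 j i" using Sf_sym[OF sym] by simp
    moreover have "E (i-2) (j-2) = E (j-2) (i-2)" using symE by simp
    ultimately show ?thesis using False by (auto simp: mk_def)
  qed
  show "mk n m A0 E \<in> sym_mats n m" unfolding sym_mats_def using bnd zer sm by auto
  show "Lf n m (mk n m A0 E) = E"
  proof (rule ext, rule ext)
    fix i j
    show "Lf n m (mk n m A0 E) i j = E i j"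
    proof (cases "i < n - 2 \<and> j < n - 2")
      case True
      have "mk n m A0 E (i+2) (j+2) = (E i j + Sf m A0 (i+2) (j+2)) mod m"
        using True by (auto simp: mk_def)
      hence "Lf n m (mk n m A0 E) i j = ((E i j + Sf m A0 (i+2) (j+2)) mod m - Sf m A0 (i+2) (j+2)) mod m"
        using True unfolding Lf_def by (simp only: VAf_Sf Sfe) simp
      also have "\<dots> = E i j mod m" by (simp add: mod_diff_left_eq)
      also have "\<dots> = E i j" using sym_bounds[OF E, of i j] True by simp
      finally show ?thesis .
    next
      case False thus ?thesis using sym_zero[OF E False] by (auto simp: Lf_def)
    qed
  qed
qed

lemma finite_sym: "finite (sym_mats n m)"
proof -
  let ?I = "{..<n} \<times> {..<n}"
  let ?h = "\<lambda>f i j. if i < n \<and> j < n then f (i,j) else (0::int)"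
  have "sym_mats n m \<subseteq> ?h ` (PiE ?I (\<lambda>_. {0..<m}))"
  proof
    fix A assume A: "A \<in> sym_mats n m"
    let ?f = "restrict (\<lambda>(i,j). A i j) ?I"
    have "?f \<in> PiE ?I (\<lambda>_. {0..<m})" using A by (auto simp: sym_mats_def)
    moreover have "A = ?h ?f" using A by (auto simp: sym_mats_def fun_eq_iff)
    ultimately show "A \<in> ?h ` (PiE ?I (\<lambda>_. {0..<m}))" by blast
  qed
  moreover have "finite (PiE ?I (\<lambda>_. {0..<m::int}))" by (intro finite_PiE) auto
  ultimately show ?thesis using finite_subset by blast
qed

lemma pmf_of_set_prod:
  assumes "finite R" "R \<noteq> {}" "finite T" "T \<noteq> {}"
  shows "pmf_of_set (R \<times> T) = pair_pmf (pmf_of_set R) (pmf_of_set T)"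
proof (rule pmf_eqI)
  fix x :: "'a \<times> 'b"
  obtain a b where x: "x = (a,b)" by (cases x)
  show "pmf (pmf_of_set (R \<times> T)) x = pmf (pair_pmf (pmf_of_set R) (pmf_of_set T)) x"
    using assms by (simp add: x pmf_pair card_cartesian_product split: split_indicator)
qed

theorem lemma2p2:
  fixes p \<mu> n :: nat
  assumes "prime p" and "\<mu> \<ge> 1" and "n > 2"
  defines "m \<equiv> int p ^ \<mu>"
  defines "S \<equiv> {A \<in> sym_mats n m. A 0 0 mod int p = 0 \<and> A 0 1 mod int p \<noteq> 0}"
  shows "\<exists>V :: (nat \<Rightarrow> nat \<Rightarrow> int) \<Rightarrow> (nat \<Rightarrow> nat \<Rightarrow> int).
           (\<forall>A\<in>S. block_form n m A (congr_mat n (V A) A)) \<and>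
           map_pmf (\<lambda>A. lower_block n m (congr_mat n (V A) A)) (pmf_of_set S)
             = pmf_of_set (sym_mats (n - 2) m)"
proof -
  have p2: "int p \<ge> 2" using assms(1) prime_ge_2_nat by fastforce
  have m1: "m > 1"
  proof -
    have "int p \<le> int p ^ \<mu>" using p2 assms(2) by (intro self_le_power) auto
    thus ?thesis using p2 unfolding m_def by linarith
  qed
  have m0: "m > 0" using m1 by simp
  have Ssub: "S \<subseteq> sym_mats n m" unfolding S_def by auto
  have finS: "finite S" using finite_subset[OF Ssub finite_sym] .
  have inv: "((A 0 0 * A 1 1 - A 0 1 * A 0 1) * dlt m (A 0 0) (A 0 1) (A 1 1)) mod m = 1 mod m"
    if "A \<in> S" for A
  proof -
    have "int p dvd A 0 0" "\<not> int p dvd A 0 1" using that unfolding S_def by (auto simp: dvd_eq_mod_eq_0)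
    from det_coprime[OF assms(1) this] show ?thesis unfolding m_def by (rule dlt_prop)
  qed
  have symS: "\<forall>i j. A i j = A j i" if "A \<in> S" for A using that Ssub sym_of by blast
  define W :: "nat \<Rightarrow> nat \<Rightarrow> int" where "W = (\<lambda>i j. if (i = 0 \<and> j = 1) \<or> (i = 1 \<and> j = 0) then 1 else 0)"
  have "W \<in> S" using m1 p2 assms(3) unfolding S_def sym_mats_def W_def by auto
  hence Sne: "S \<noteq> {}" by blast
  define T where "T = sym_mats (n - 2) m"
  define R where "R = projf ` S"
  define g where "g = (\<lambda>A. (projf A, Lf n m A))"
  have bij: "bij_betw g S (R \<times> T)"
    unfolding bij_betw_def
  proof
    show "inj_on g S" unfolding inj_on_def g_def using inj_lem Ssub by blast
    show "g ` S = R \<times> T"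
    proof
      show "g ` S \<subseteq> R \<times> T" unfolding g_def R_def T_def using Lf_in[OF _ m0] Ssub by auto
      show "R \<times> T \<subseteq> g ` S"
      proof
        fix x assume "x \<in> R \<times> T"
        then obtain A0 E where x: "x = (projf A0, E)" "A0 \<in> S" "E \<in> T" unfolding R_def by auto
        have A0: "A0 \<in> sym_mats n m" using x Ssub by auto
        note mkl = mk_lem[OF A0 x(3)[unfolded T_def] m0]
        have "mk n m A0 E \<in> S" using mkl(1) x(2) unfolding S_def by (simp add: mk_def)
        moreover have "g (mk n m A0 E) = x" using mkl x unfolding g_def by simp
        ultimately show "x \<in> g ` S" by blast
      qed
    qed
  qed
  have finR: "finite R" "R \<noteq> {}" unfolding R_def using finS Sne by auto
  have "(\<lambda>_ _. 0) \<in> T" using m0 by (simp add: T_def sym_mats_def)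
  hence finT: "finite T" "T \<noteq> {}" unfolding T_def using finite_sym by auto
  show ?thesis
  proof (intro exI[of _ "Vf m"] conjI ballI)
    fix A assume A: "A \<in> S"
    show "block_form n m A (congr_mat n (Vf m A) A)" by (rule block_ok[OF assms(3) symS[OF A] inv[OF A]])
  next
    have "map_pmf (\<lambda>A. lower_block n m (congr_mat n (Vf m A) A)) (pmf_of_set S)
        = map_pmf (snd \<circ> g) (pmf_of_set S)"
    proof (rule map_pmf_cong[OF refl])
      fix A assume "A \<in> set_pmf (pmf_of_set S)"
      hence A: "A \<in> S" using finS Sne by simp
      show "lower_block n m (congr_mat n (Vf m A) A) = (snd \<circ> g) A"
        using lower_ok[OF assms(3) symS[OF A] inv[OF A]] by (simp add: g_def)
    qed
    also have "\<dots> = map_pmf snd (map_pmf g (pmf_of_set S))" by (simp add: pmf.map_comp)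
    also have "\<dots> = map_pmf snd (pmf_of_set (R \<times> T))" using map_pmf_of_set_bij_betw[OF bij Sne finS] by simp
    also have "\<dots> = pmf_of_set T" using pmf_of_set_prod[OF finR finT] by (simp add: map_snd_pair_pmf)
    finally show "map_pmf (\<lambda>A. lower_block n m (congr_mat n (Vf m A) A)) (pmf_of_set S) = pmf_of_set (sym_mats (n - 2) m)"
      unfolding T_def .
  qed
qed

end
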